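(* Let $P$ be a $d$-polytope with slack ideal $I_P$ and non-incidence toric ideal $T_P$ (defined in the context). If a binomial $\mathbf x^{\mathbf a}-\mathbf x^{\mathbf b}$, with $\mathbf a,\mathbf b\in\mathbb{Z}_{\geq0}^t$, belongs to $I_P$, then it also belongs to $T_P$.
   Context: Let $P\subset\mathbb{R}^d$ be a $d$-dimensional polytope with labelled vertices $\mathbf p_1,\dots,\mathbf p_v$ and labelled facets $F_1,\dots,F_f$. The symbolic slack matrix $S_P(\mathbf x)$ is the $v\times f$ matrix with a $0$ in entry $(i,j)$ if $\mathbf p_i\in F_j$ and a distinct variable $x_{ij}$ otherwise; let $x_1,\dots,x_t$ denote all these variables. The slack ideal is $I_P=\langle (d+2)\text{-minors of } S_P(\mathbf x)\rangle : (x_1\cdots x_t)^\infty\subseteq\mathbb{C}[x_1,\dots,x_t]$. The non-incidence graph $G_P$ is the bipartite graph on the vertices and facets of $P$ with an edge $\{\mathbf p_i,F_j\}$ iff $\mathbf p_i\notin F_j$ (labelled by $x_{ij}$). $T_P$ is the toric ideal of the vertex-edge incidence matrix of $G_P$, i.e. the kernel of the map $x_{ij}\mapsto s_iu_j$ into $\mathbb{C}[s_1^{\pm1},\dots,s_v^{\pm1},u_1^{\pm1},\dots,u_f^{\pm1}]$. *)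

theory Defs
  imports "HOL-Analysis.Analysis" "HOL-Library.Poly_Mapping" "HOL-Combinatorics.Permutations"
begin

text \<open>Multivariate polynomials with complex coefficients in variables of type 'v:
  a polynomial is a finitely supported map from monomials (finitely supported exponent
  vectors 'v =>0 nat) to coefficients.\<close>
type_synonym 'v mpoly = "('v \<Rightarrow>\<^sub>0 nat) \<Rightarrow>\<^sub>0 complex"

definition mvar :: "'v \<Rightarrow> 'v mpoly" where
  "mvar x = Poly_Mapping.single (Poly_Mapping.single x 1) 1"

definition mmonom :: "('v \<Rightarrow>\<^sub>0 nat) \<Rightarrow> 'v mpoly" where
  "mmonom a = Poly_Mapping.single a 1"

definition poly_ring :: "'v set \<Rightarrow> 'v mpoly set" where
  "poly_ring X = {p. \<forall>m \<in> Poly_Mapping.keys p. Poly_Mapping.keys m \<subseteq> X}"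

definition ideal_gen :: "'v mpoly set \<Rightarrow> 'v mpoly set \<Rightarrow> 'v mpoly set" where
  "ideal_gen R G = {p. \<exists>S h. finite S \<and> S \<subseteq> G \<and> (\<forall>g\<in>S. h g \<in> R) \<and> p = (\<Sum>g\<in>S. h g * g)}"

definition saturation :: "'v mpoly set \<Rightarrow> 'v mpoly set \<Rightarrow> 'v mpoly \<Rightarrow> 'v mpoly set" where
  "saturation R I f = {p \<in> R. \<exists>n. f ^ n * p \<in> I}"

text \<open>Setting: P a d-polytope in R^d (d = DIM('a)), with vertices labelled
  pv 0, ..., pv (nv-1) and facets labelled Fc 0, ..., Fc (nf-1).\<close>
definition labelled_polytope ::
  "'a::euclidean_space set \<Rightarrow> nat \<Rightarrow> (nat \<Rightarrow> 'a) \<Rightarrow> nat \<Rightarrow> (nat \<Rightarrow> 'a set) \<Rightarrow> bool" where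
  "labelled_polytope P nv pv nf Fc \<longleftrightarrow>
     polytope P \<and> aff_dim P = int DIM('a) \<and>
     bij_betw pv {..<nv} {v. v extreme_point_of P} \<and>
     bij_betw Fc {..<nf} {F. F facet_of P}"

definition slack_vars :: "nat \<Rightarrow> (nat \<Rightarrow> 'a) \<Rightarrow> nat \<Rightarrow> (nat \<Rightarrow> 'a set) \<Rightarrow> (nat \<times> nat) set" where
  "slack_vars nv pv nf Fc = {(i, j). i < nv \<and> j < nf \<and> pv i \<notin> Fc j}"

definition sym_slack :: "(nat \<Rightarrow> 'a) \<Rightarrow> (nat \<Rightarrow> 'a set) \<Rightarrow> nat \<Rightarrow> nat \<Rightarrow> (nat \<times> nat) mpoly" where
  "sym_slack pv Fc i j = (if pv i \<in> Fc j then 0 else mvar (i, j))"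

definition minor :: "(nat \<Rightarrow> nat \<Rightarrow> 'r::comm_ring_1) \<Rightarrow> nat \<Rightarrow> (nat \<Rightarrow> nat) \<Rightarrow> (nat \<Rightarrow> nat) \<Rightarrow> 'r" where
  "minor M k r c = (\<Sum>\<pi> | \<pi> permutes {..<k}. of_int (sign \<pi>) * (\<Prod>l<k. M (r l) (c (\<pi> l))))"

definition minors :: "(nat \<Rightarrow> nat \<Rightarrow> 'r::comm_ring_1) \<Rightarrow> nat \<Rightarrow> nat \<Rightarrow> nat \<Rightarrow> 'r set" where
  "minors M nrows ncols k = {minor M k r c | r c.
      strict_mono_on {..<k} r \<and> r ` {..<k} \<subseteq> {..<nrows} \<and>
      strict_mono_on {..<k} c \<and> c ` {..<k} \<subseteq> {..<ncols}}"

definition slack_ideal ::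
  "nat \<Rightarrow> nat \<Rightarrow> (nat \<Rightarrow> 'a::euclidean_space) \<Rightarrow> nat \<Rightarrow> (nat \<Rightarrow> 'a set) \<Rightarrow> (nat \<times> nat) mpoly set" where
  "slack_ideal d nv pv nf Fc =
     (let X = slack_vars nv pv nf Fc; R = poly_ring X in
      saturation R (ideal_gen R (minors (sym_slack pv Fc) nv nf (d + 2))) (\<Prod>x\<in>X. mvar x))"

text \<open>Variables s_i (vertices) and u_j (facets) of the target ring.\<close>
datatype su_var = SV nat | UV nat

text \<open>Exponent of the image of x^m under x_ij |-> s_i u_j.\<close>
definition toric_exp :: "((nat \<times> nat) \<Rightarrow>\<^sub>0 nat) \<Rightarrow> (su_var \<Rightarrow>\<^sub>0 nat)" where
  "toric_exp m = (\<Sum>ij\<in>Poly_Mapping.keys m.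
      Poly_Mapping.single (SV (fst ij)) (Poly_Mapping.lookup m ij)
    + Poly_Mapping.single (UV (snd ij)) (Poly_Mapping.lookup m ij))"

text \<open>The C-algebra homomorphism x_ij |-> s_i u_j (extended linearly).\<close>
definition toric_map :: "(nat \<times> nat) mpoly \<Rightarrow> su_var mpoly" where
  "toric_map p = (\<Sum>m\<in>Poly_Mapping.keys p.
      Poly_Mapping.single (toric_exp m) (Poly_Mapping.lookup p m))"

definition toric_ideal :: "nat \<Rightarrow> (nat \<Rightarrow> 'a) \<Rightarrow> nat \<Rightarrow> (nat \<Rightarrow> 'a set) \<Rightarrow> (nat \<times> nat) mpoly set" where
  "toric_ideal nv pv nf Fc = {p \<in> poly_ring (slack_vars nv pv nf Fc). toric_map p = 0}"

end

theory Submission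
  imports Defs "Jordan_Normal_Form.Determinant"
begin


lemma minor_lowrank:
  fixes M :: "nat \<Rightarrow> nat \<Rightarrow> 'r::comm_ring_1"
  assumes M: "\<And>i j. M i j = (\<Sum>l<N. A i l * B l j)" and Nk: "N < k"
  shows "minor M k r c = 0"
proof -
  define A' where "A' = Matrix.mat k k (\<lambda>(x,y). if y < N then A (r x) y else (0::'r))"
  define B' where "B' = Matrix.mat k k (\<lambda>(x,y). if x < N then B x (c y) else (0::'r))"
  have A'c: "A' \<in> carrier_mat k k" and B'c: "B' \<in> carrier_mat k k" by (auto simp: A'_def B'_def)
  have prodAB: "(A' * B') $$ (x,y) = M (r x) (c y)" if "x < k" "y < k" for x y
  proof -
    have "(A' * B') $$ (x,y) = (\<Sum>z = 0..<k. A' $$ (x,z) * B' $$ (z,y))"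
      using that A'c B'c by (simp add: scalar_prod_def)
    also have "\<dots> = (\<Sum>z = 0..<k. if z < N then A (r x) z * B z (c y) else 0)"
      using that by (intro sum.cong) (auto simp: A'_def B'_def)
    also have "\<dots> = (\<Sum>z\<in>{0..<k} \<inter> {z. z < N}. A (r x) z * B z (c y))"
      by (simp add: sum.inter_restrict)
    also have "{0..<k} \<inter> {z. z < N} = {..<N}" using Nk by auto
    finally show ?thesis using M by simp
  qed
  have "det B' = 0"
  proof -
    have "(\<Prod>i = 0..<k. B' $$ (i, p i)) = 0" if p: "p permutes {0..<k}" for p
    proof (rule prod_zero)
      show "\<exists>a\<in>{0..<k}. B' $$ (a, p a) = 0"
        using Nk permutes_in_image[OF p, of N] by (intro bexI[of _ N]) (auto simp: B'_def)
    qed auto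
    then show ?thesis by (simp add: det_def'[OF B'c])
  qed
  then have "det (A' * B') = 0" using det_mult[OF A'c B'c] by simp
  moreover have "det (A' * B') = minor M k r c"
    unfolding det_def'[OF mult_carrier_mat[OF A'c B'c]] minor_def
    by (intro sum.cong) (auto simp: prodAB atLeast0LessThan permutes_in_image)
  ultimately show ?thesis by simp
qed


definition evmon :: "('v \<Rightarrow> complex) \<Rightarrow> ('v \<Rightarrow>\<^sub>0 nat) \<Rightarrow> complex" where
  "evmon x m = (\<Prod>v\<in>Poly_Mapping.keys m. x v ^ Poly_Mapping.lookup m v)"

definition ev :: "('v \<Rightarrow> complex) \<Rightarrow> 'v mpoly \<Rightarrow> complex" where
  "ev x p = (\<Sum>m\<in>Poly_Mapping.keys p. Poly_Mapping.lookup p m * evmon x m)"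

lemma evmon_gen: "finite S \<Longrightarrow> Poly_Mapping.keys m \<subseteq> S \<Longrightarrow>
   evmon x m = (\<Prod>v\<in>S. x v ^ Poly_Mapping.lookup m v)"
  unfolding evmon_def by (rule prod.mono_neutral_left) (auto simp: in_keys_iff)

lemma evmon_add: "evmon x (m + n) = evmon x m * evmon x n"
proof -
  let ?S = "Poly_Mapping.keys m \<union> Poly_Mapping.keys n"
  have "evmon x (m+n) = (\<Prod>v\<in>?S. x v ^ Poly_Mapping.lookup (m+n) v)"
    by (rule evmon_gen) (auto simp: keys_add)
  also have "\<dots> = (\<Prod>v\<in>?S. x v ^ Poly_Mapping.lookup m v) * (\<Prod>v\<in>?S. x v ^ Poly_Mapping.lookup n v)"
    by (simp add: lookup_add power_add prod.distrib)
  also have "\<dots> = evmon x m * evmon x n"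
    by (subst (1 2) evmon_gen[of ?S]) auto
  finally show ?thesis .
qed

lemma evmon_zero[simp]: "evmon x 0 = 1" by (simp add: evmon_def)

lemma ev_gen: "finite S \<Longrightarrow> Poly_Mapping.keys p \<subseteq> S \<Longrightarrow>
   ev x p = (\<Sum>m\<in>S. Poly_Mapping.lookup p m * evmon x m)"
  unfolding ev_def by (rule sum.mono_neutral_left) (auto simp: in_keys_iff)

lemma ev_add: "ev x (p + q) = ev x p + ev x q"
proof -
  let ?S = "Poly_Mapping.keys p \<union> Poly_Mapping.keys q"
  have "ev x (p+q) = (\<Sum>m\<in>?S. Poly_Mapping.lookup (p+q) m * evmon x m)"
    by (rule ev_gen) (auto simp: keys_add)
  also have "\<dots> = (\<Sum>m\<in>?S. Poly_Mapping.lookup p m * evmon x m) + (\<Sum>m\<in>?S. Poly_Mapping.lookup q m * evmon x m)"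
    by (simp add: lookup_add distrib_right sum.distrib)
  also have "\<dots> = ev x p + ev x q"
    by (subst (1 2) ev_gen[of ?S]) auto
  finally show ?thesis .
qed

lemma ev_zero[simp]: "ev x 0 = 0" by (simp add: ev_def)

lemma ev_uminus: "ev x (- p) = - ev x p"
  by (simp add: ev_def lookup_uminus sum_negf)

lemma ev_diff: "ev x (p - q) = ev x p - ev x q"
  using ev_add[of x p "-q"] by (simp add: ev_uminus)

lemma ev_single: "ev x (Poly_Mapping.single m c) = c * evmon x m"
  by (cases "c = 0") (simp_all add: ev_def)

lemma ev_sum: "ev x (\<Sum>i\<in>I. f i) = (\<Sum>i\<in>I. ev x (f i))"
  by (induction I rule: infinite_finite_induct) (simp_all add: ev_add)

lemma expand: "p = (\<Sum>m\<in>Poly_Mapping.keys p. Poly_Mapping.single m (Poly_Mapping.lookup p m))"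
  by (rule poly_mapping_eqI) (auto simp: lookup_sum lookup_single when_def in_keys_iff)

lemma ev_mult: "ev x (p * q) = ev x p * ev x q"
proof -
  have "p * q = (\<Sum>m\<in>Poly_Mapping.keys p. \<Sum>n\<in>Poly_Mapping.keys q.
      Poly_Mapping.single m (Poly_Mapping.lookup p m) * Poly_Mapping.single n (Poly_Mapping.lookup q n))"
    by (subst (1) expand, subst (2) expand) (simp add: sum_product)
  then have "ev x (p * q) = (\<Sum>m\<in>Poly_Mapping.keys p. \<Sum>n\<in>Poly_Mapping.keys q.
      (Poly_Mapping.lookup p m * evmon x m) * (Poly_Mapping.lookup q n * evmon x n))"
    by (simp add: ev_sum mult_single ev_single evmon_add mult_ac)
  also have "\<dots> = ev x p * ev x q" by (simp add: ev_def sum_product)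
  finally show ?thesis .
qed

lemma ev_one[simp]: "ev x 1 = 1"
  using ev_single[of x 0 1] by simp

lemma ev_prod: "ev x (\<Prod>i\<in>I. f i) = (\<Prod>i\<in>I. ev x (f i))"
  by (induction I rule: infinite_finite_induct) (simp_all add: ev_mult)

lemma ev_power: "ev x (p ^ n) = ev x p ^ n"
  by (induction n) (simp_all add: ev_mult)

lemma ev_of_int: "ev x (of_int z) = of_int z"
  using ev_single[of x 0 "of_int z"] by (simp add: single_of_int)

lemma ev_mvar: "ev x (mvar v) = x v"
  by (simp add: mvar_def ev_single evmon_def)

lemma ev_minor: "ev x (minor M k r c) = minor (\<lambda>i j. ev x (M i j)) k r c"
  by (simp add: minor_def ev_sum ev_mult ev_prod ev_of_int)



lemma slack_lowrank:
  fixes p w :: "nat \<Rightarrow> 'a::euclidean_space" and \<beta> s u :: "nat \<Rightarrow> real"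
  shows "\<exists>A B. \<forall>i j. complex_of_real (s i * u j * (\<beta> j - w j \<bullet> p i)) = (\<Sum>l<DIM('a)+1. A i l * B l j)"
proof -
  obtain h where h: "bij_betw h {0..<DIM('a)} (Basis::'a set)"
    using ex_bij_betw_nat_finite[of "Basis::'a set"] by auto
  define A where "A i l = (if l < DIM('a) then - complex_of_real (s i * (p i \<bullet> h l)) else complex_of_real (s i))" for i l
  define B where "B l j = (if l < DIM('a) then complex_of_real (u j * (w j \<bullet> h l)) else complex_of_real (u j * \<beta> j))" for l j
  have "complex_of_real (s i * u j * (\<beta> j - w j \<bullet> p i)) = (\<Sum>l<DIM('a)+1. A i l * B l j)" for i j
  proof -
    have "(\<Sum>l<DIM('a). (p i \<bullet> h l) * (w j \<bullet> h l)) = (\<Sum>e\<in>Basis. (p i \<bullet> e) * (w j \<bullet> e))"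
      using sum.reindex_bij_betw[OF h, of "\<lambda>e. (p i \<bullet> e) * (w j \<bullet> e)"] by (simp add: atLeast0LessThan)
    also have "\<dots> = w j \<bullet> p i" by (simp add: euclidean_inner[of "p i" "w j"] inner_commute)
    finally have e: "(\<Sum>l<DIM('a). (p i \<bullet> h l) * (w j \<bullet> h l)) = w j \<bullet> p i" .
    have "(\<Sum>l<DIM('a)+1. A i l * B l j) = (\<Sum>l<DIM('a). A i l * B l j) + A i DIM('a) * B DIM('a) j"
      by simp
    also have "(\<Sum>l<DIM('a). A i l * B l j) = - complex_of_real (s i * u j * (\<Sum>l<DIM('a). (p i \<bullet> h l) * (w j \<bullet> h l)))"
      by (simp add: A_def B_def sum_negf sum_distrib_left mult_ac)
    finally show ?thesis by (simp add: e A_def B_def algebra_simps)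
  qed
  then show ?thesis by blast
qed



lemma prod_split:
  "(\<Prod>v\<in>K. (s (fst v) * u (snd v) * c v) ^ f v) =
   (\<Prod>v\<in>K. s (fst v) ^ f v) * (\<Prod>v\<in>K. u (snd v) ^ f v) * (\<Prod>v\<in>K. (c v :: real) ^ f v)"
  by (simp add: power_mult_distrib prod.distrib)

lemma prod_ind:
  "(\<Prod>v\<in>K. ((if P v then 2 else 1)::real) ^ f v) = 2 ^ (\<Sum>v\<in>K. if P v then f v else 0)"
  by (subst power_sum) (rule prod.cong, auto)

lemma toric_exp_SV:
  "Poly_Mapping.lookup (toric_exp m) (SV i) = (\<Sum>v\<in>Poly_Mapping.keys m. if fst v = i then Poly_Mapping.lookup m v else 0)"
  by (simp add: toric_exp_def lookup_sum lookup_add lookup_single when_def)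

lemma toric_exp_UV:
  "Poly_Mapping.lookup (toric_exp m) (UV i) = (\<Sum>v\<in>Poly_Mapping.keys m. if snd v = i then Poly_Mapping.lookup m v else 0)"
  by (simp add: toric_exp_def lookup_sum lookup_add lookup_single when_def)

lemma toric_map_binom:
  assumes "toric_exp a = toric_exp b"
  shows "toric_map (mmonom a - mmonom b) = 0"
proof (cases "a = b")
  case True then show ?thesis by (simp add: toric_map_def)
next
  case False
  have k: "Poly_Mapping.keys (mmonom a - mmonom b) = {a, b}"
    using False by (auto simp: mmonom_def in_keys_iff lookup_minus lookup_single when_def split: if_splits)
  show ?thesis using False assms
    unfolding toric_map_def k
    by (simp add: lookup_minus mmonom_def lookup_single when_def flip: single_add)
qed



theorem lemma3p4:
  fixes P :: "'a::euclidean_space set"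
    and pv :: "nat \<Rightarrow> 'a" and Fc :: "nat \<Rightarrow> 'a set"
    and a b :: "(nat \<times> nat) \<Rightarrow>\<^sub>0 nat"
  assumes "labelled_polytope P nv pv nf Fc"
    and "Poly_Mapping.keys a \<subseteq> slack_vars nv pv nf Fc"
    and "Poly_Mapping.keys b \<subseteq> slack_vars nv pv nf Fc"
    and "mmonom a - mmonom b \<in> slack_ideal DIM('a) nv pv nf Fc"
  shows "mmonom a - mmonom b \<in> toric_ideal nv pv nf Fc"
proof -
  let ?X = "slack_vars nv pv nf Fc"
  let ?R = "poly_ring ?X"
  let ?G = "minors (sym_slack pv Fc) nv nf (DIM('a) + 2)"
  let ?f = "\<Prod>x\<in>?X. mvar x"
  have polyP: "polytope P" and bpv: "bij_betw pv {..<nv} {v. v extreme_point_of P}"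
    and bFc: "bij_betw Fc {..<nf} {F. F facet_of P}"
    using assms(1) by (auto simp: labelled_polytope_def)
  have pvP: "pv i \<in> P" if "i < nv" for i
    using bij_betw_apply[OF bpv] that by (auto simp: extreme_point_of_def)
  have "\<forall>j. \<exists>wb. j < nf \<longrightarrow> P \<subseteq> {x. fst wb \<bullet> x \<le> snd wb} \<and> Fc j = P \<inter> {x. fst wb \<bullet> x = snd wb}"
  proof
    fix j
    show "\<exists>wb. j < nf \<longrightarrow> P \<subseteq> {x. fst wb \<bullet> x \<le> snd wb} \<and> Fc j = P \<inter> {x. fst wb \<bullet> x = snd wb}"
    proof (cases "j < nf")
      case True
      then have "Fc j facet_of P" using bij_betw_apply[OF bFc] by auto
      then have "Fc j exposed_face_of P"
        using exposed_face_of_polyhedron[OF polytope_imp_polyhedron[OF polyP]] facet_of_imp_face_of by blast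
      then obtain w \<beta> where "P \<subseteq> {x. w \<bullet> x \<le> \<beta>}" "Fc j = P \<inter> {x. w \<bullet> x = \<beta>}"
        unfolding exposed_face_of_def by blast
      then show ?thesis by (intro exI[of _ "(w, \<beta>)"]) auto
    qed auto
  qed
  then obtain wb where wb: "\<And>j. j < nf \<Longrightarrow> P \<subseteq> {x. fst (wb j) \<bullet> x \<le> snd (wb j)} \<and> Fc j = P \<inter> {x. fst (wb j) \<bullet> x = snd (wb j)}"
    by metis
  define w where "w j = fst (wb j)" for j
  define \<beta> where "\<beta> j = snd (wb j)" for j
  define sl where "sl i j = \<beta> j - w j \<bullet> pv i" for i j
  have sl_nonneg: "sl i j \<ge> 0" if "i < nv" "j < nf" for i j
    using wb[OF that(2)] pvP[OF that(1)] by (auto simp: sl_def w_def \<beta>_def)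
  have sl_zero: "sl i j = 0 \<longleftrightarrow> pv i \<in> Fc j" if "i < nv" "j < nf" for i j
    using wb[OF that(2)] pvP[OF that(1)] by (auto simp: sl_def w_def \<beta>_def)
  have sl_pos: "sl (fst v) (snd v) > 0" if "v \<in> ?X" for v
    using that sl_nonneg sl_zero by (fastforce simp: slack_vars_def less_le)
  have finX: "finite ?X"
    by (rule finite_subset[of _ "{..<nv} \<times> {..<nf}"]) (auto simp: slack_vars_def)
  define pt where "pt s u = (\<lambda>(i,j). complex_of_real (s i * u j * sl i j))" for s u :: "nat \<Rightarrow> real"
  define F where "F m s u = (\<Prod>v\<in>Poly_Mapping.keys m. (s (fst v) * u (snd v) * sl (fst v) (snd v)) ^ Poly_Mapping.lookup m v)"
    for m and s u :: "nat \<Rightarrow> real"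
  have evF: "ev (pt s u) (mmonom m) = complex_of_real (F m s u)" for m s u
    by (simp add: mmonom_def ev_single evmon_def F_def pt_def case_prod_beta)
  from assms(4) obtain n where n: "?f ^ n * (mmonom a - mmonom b) \<in> ideal_gen ?R ?G"
    by (auto simp: slack_ideal_def Let_def saturation_def)
  then obtain S h where S: "finite S" "S \<subseteq> ?G" and Seq: "?f ^ n * (mmonom a - mmonom b) = (\<Sum>g\<in>S. h g * g)"
    by (auto simp: ideal_gen_def)
  have Z: "F a s u = F b s u" if spos: "\<And>i. s i > 0" and upos: "\<And>j. u j > 0" for s u
  proof -
    let ?x = "pt s u"
    have evg: "ev ?x g = 0" if "g \<in> ?G" for g
    proof -
      obtain r c where g: "g = minor (sym_slack pv Fc) (DIM('a) + 2) r c"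
        and r: "r ` {..<DIM('a) + 2} \<subseteq> {..<nv}" and c: "c ` {..<DIM('a) + 2} \<subseteq> {..<nf}"
        using \<open>g \<in> ?G\<close> by (auto simp: minors_def)
      have "ev ?x g = minor (\<lambda>i j. ev ?x (sym_slack pv Fc i j)) (DIM('a) + 2) r c"
        by (simp add: g ev_minor)
      also have "\<dots> = minor (\<lambda>i j. complex_of_real (s i * u j * (\<beta> j - w j \<bullet> pv i))) (DIM('a) + 2) r c"
        unfolding minor_def
      proof (intro sum.cong refl arg_cong2[where f="(*)"] prod.cong)
        fix \<pi> l assume \<pi>: "\<pi> \<in> {\<pi>. \<pi> permutes {..<DIM('a) + 2}}" and l: "l \<in> {..<DIM('a) + 2}"
        have rl: "r l < nv" using r l by auto
        have cl: "c (\<pi> l) < nf" using c permutes_in_image[of \<pi> "{..<DIM('a) + 2}" l] \<pi> l by auto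
        show "ev ?x (sym_slack pv Fc (r l) (c (\<pi> l))) = complex_of_real (s (r l) * u (c (\<pi> l)) * (\<beta> (c (\<pi> l)) - w (c (\<pi> l)) \<bullet> pv (r l)))"
          using sl_zero[OF rl cl] by (auto simp: sym_slack_def ev_mvar pt_def sl_def)
      qed
      also have "\<dots> = 0"
      proof -
        obtain A B where AB: "\<forall>i j. complex_of_real (s i * u j * (\<beta> j - w j \<bullet> pv i)) = (\<Sum>l<DIM('a)+1. A i l * B l j)"
          using slack_lowrank by blast
        show ?thesis by (rule minor_lowrank[where N="DIM('a)+1" and A=A and B=B]) (use AB in auto)
      qed
      finally show ?thesis .
    qed
    have "ev ?x (?f ^ n * (mmonom a - mmonom b)) = 0"
      unfolding Seq ev_sum using S by (auto simp: ev_mult evg intro!: sum.neutral)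
    then have prod0: "ev ?x ?f ^ n * (ev ?x (mmonom a) - ev ?x (mmonom b)) = 0"
      by (simp add: ev_mult ev_power ev_diff)
    have "ev ?x ?f = (\<Prod>v\<in>?X. ?x v)" by (simp add: ev_prod ev_mvar)
    also have "\<dots> \<noteq> 0"
    proof -
      have "?x v \<noteq> 0" if "v \<in> ?X" for v
        using sl_pos[OF that] spos[of "fst v"] upos[of "snd v"] by (auto simp: pt_def case_prod_beta)
      then show ?thesis using finX by auto
    qed
    finally have "ev ?x (mmonom a) = ev ?x (mmonom b)" using prod0 by simp
    then show ?thesis by (simp add: evF)
  qed
  define C where "C m = (\<Prod>v\<in>Poly_Mapping.keys m. sl (fst v) (snd v) ^ Poly_Mapping.lookup m v)" for m
  have Cpos: "C m > 0" if "Poly_Mapping.keys m \<subseteq> ?X" for m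
    unfolding C_def using that sl_pos by (auto intro!: prod_pos)
  have Fsplit: "F m s u = (\<Prod>v\<in>Poly_Mapping.keys m. s (fst v) ^ Poly_Mapping.lookup m v) *
      (\<Prod>v\<in>Poly_Mapping.keys m. u (snd v) ^ Poly_Mapping.lookup m v) * C m" for m s u
    unfolding F_def C_def by (rule prod_split)
  have C1: "C a = C b" using Z[of "\<lambda>_. 1" "\<lambda>_. 1"] by (simp add: Fsplit)
  have row: "(\<Sum>v\<in>Poly_Mapping.keys a. if fst v = i then Poly_Mapping.lookup a v else 0) =
     (\<Sum>v\<in>Poly_Mapping.keys b. if fst v = i then Poly_Mapping.lookup b v else 0)" for i
  proof -
    have "F a (\<lambda>k. if k = i then 2 else 1) (\<lambda>_. 1) = F b (\<lambda>k. if k = i then 2 else 1) (\<lambda>_. 1)"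
      by (rule Z) auto
    then have "(2::real) ^ (\<Sum>v\<in>Poly_Mapping.keys a. if fst v = i then Poly_Mapping.lookup a v else 0) * C a
       = 2 ^ (\<Sum>v\<in>Poly_Mapping.keys b. if fst v = i then Poly_Mapping.lookup b v else 0) * C b"
      by (simp add: Fsplit prod_ind[where P="\<lambda>v. fst v = i"])
    then show ?thesis using C1 Cpos[OF assms(2)] by simp
  qed
  have col: "(\<Sum>v\<in>Poly_Mapping.keys a. if snd v = j then Poly_Mapping.lookup a v else 0) =
     (\<Sum>v\<in>Poly_Mapping.keys b. if snd v = j then Poly_Mapping.lookup b v else 0)" for j
  proof -
    have "F a (\<lambda>_. 1) (\<lambda>k. if k = j then 2 else 1) = F b (\<lambda>_. 1) (\<lambda>k. if k = j then 2 else 1)"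
      by (rule Z) auto
    then have "(2::real) ^ (\<Sum>v\<in>Poly_Mapping.keys a. if snd v = j then Poly_Mapping.lookup a v else 0) * C a
       = 2 ^ (\<Sum>v\<in>Poly_Mapping.keys b. if snd v = j then Poly_Mapping.lookup b v else 0) * C b"
      by (simp add: Fsplit prod_ind[where P="\<lambda>v. snd v = j"])
    then show ?thesis using C1 Cpos[OF assms(2)] by simp
  qed
  have te: "toric_exp a = toric_exp b"
  proof (rule poly_mapping_eqI)
    fix k show "Poly_Mapping.lookup (toric_exp a) k = Poly_Mapping.lookup (toric_exp b) k"
      by (cases k) (simp_all add: toric_exp_SV toric_exp_UV row col)
  qed
  have "Poly_Mapping.keys (mmonom a - mmonom b) \<subseteq> {a, b}"
    by (auto simp: mmonom_def in_keys_iff lookup_minus lookup_single when_def split: if_splits)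
  then have "mmonom a - mmonom b \<in> ?R"
    using assms(2,3) by (auto simp: poly_ring_def)
  then show ?thesis using toric_map_binom[OF te] by (simp add: toric_ideal_def)
qed

end
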